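(* Let $(R,+,\times)$ be a finite ring with identity $1$, of order $n$, and let $G$ be a subgroup of the multiplicative group $R^\times$ of invertible elements of $R$. Let $f_G$ be the coset index function induced by $G$. Then $f_G$ is an $(n,m,S)$ zero-difference function from $(R,+)$ to $\mathbb{Z}_m$, where $$m=\sum_{a\in d(G)}\frac{M(G,a)}{a},\qquad S=\{N(G,a)\mid a\in R\setminus\{0\}\}.$$
   Context: For a subgroup $G$ of $R^\times$ and $r\in R$, the coset $rG=\{rg\mid g\in G\}$; the sets $rG$ ($r\in R$) form a partition $D_G$ of $R$. The coset index function induced by $G$ is $f_G(x)=h_G(C_x)$, where $C_x\in D_G$ is the coset containing $x$ and $h_G:D_G\to\mathbb{Z}_{|D_G|}$ is a fixed bijection. Notation: $N(G,a)$ is the size of the union over all $g\in G$ of the solution sets $\{x\in R\mid x(g-1)=a\}$; $d(G)$ is the set of sizes $|rG|$ as $r$ runs over $R$; for a positive integer $a$, $M(G,a)$ is the number of $r\in R$ with $|rG|=a$. Definition: for finite abelian groups $A,B$, a function $f:A\to B$ is an $(n,m,S)$ zero-difference function (ZDF), where $S\subset\mathbb{N}$, if $n=|A|$, $m=|f(A)|$, and for every nonzero $a\in A$, $|\{x\in A\mid f(x+a)-f(x)=0\}|\in S$. *)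

theory Defs
  imports Complex_Main
begin

definition ring_unit :: "'a::ring_1 \<Rightarrow> bool" where
  "ring_unit u \<longleftrightarrow> (\<exists>v. u * v = 1 \<and> v * u = 1)"

definition unit_subgroup :: "'a::ring_1 set \<Rightarrow> bool" where
  "unit_subgroup G \<longleftrightarrow> G \<subseteq> {u. ring_unit u} \<and> 1 \<in> G \<and>
     (\<forall>x\<in>G. \<forall>y\<in>G. x * y \<in> G) \<and>
     (\<forall>x\<in>G. \<exists>y\<in>G. x * y = 1 \<and> y * x = 1)"

definition coset :: "'a::ring_1 \<Rightarrow> 'a set \<Rightarrow> 'a set" where
  "coset r G = (\<lambda>g. r * g) ` G"

definition cosets :: "'a::ring_1 set \<Rightarrow> 'a set set" where
  "cosets G = range (\<lambda>r. coset r G)"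

definition coset_index_fun :: "('a set \<Rightarrow> nat) \<Rightarrow> 'a::ring_1 set \<Rightarrow> 'a \<Rightarrow> nat" where
  "coset_index_fun h G x = h (coset x G)"

definition NG :: "'a::ring_1 set \<Rightarrow> 'a \<Rightarrow> nat" where
  "NG G a = card (\<Union>g\<in>G. {x. x * (g - 1) = a})"

definition dG :: "'a::ring_1 set \<Rightarrow> nat set" where
  "dG G = (\<lambda>r. card (coset r G)) ` UNIV"

definition MG :: "'a::ring_1 set \<Rightarrow> nat \<Rightarrow> nat" where
  "MG G a = card {r. card (coset r G) = a}"

(* (n,m,S) zero-difference function f : A \<rightarrow> B, A = UNIV (additive group of 'a),
   with B given as a set of values; f(x+a) - f(x) = 0 rendered as f(x+a) = f(x) *)
definition ZDF :: "('a::ab_group_add \<Rightarrow> 'b) \<Rightarrow> 'b set \<Rightarrow> nat \<Rightarrow> nat \<Rightarrow> nat set \<Rightarrow> bool" where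
  "ZDF f B n m S \<longleftrightarrow> range f \<subseteq> B \<and> n = card (UNIV :: 'a set) \<and> m = card (range f) \<and>
     (\<forall>a. a \<noteq> 0 \<longrightarrow> card {x. f (x + a) = f x} \<in> S)"

end

theory Submission
  imports Defs
begin

lemma coset_mult:
  assumes G: "unit_subgroup G" and g: "g \<in> G"
  shows "coset (x * g) G = coset (x::'a::ring_1) G"
proof -
  have cl: "\<forall>x\<in>G. \<forall>y\<in>G. x * y \<in> G" and inv: "\<forall>x\<in>G. \<exists>y\<in>G. x * y = 1 \<and> y * x = 1"
    using G unfolding unit_subgroup_def by auto
  obtain gi where gi: "gi \<in> G" "g * gi = 1" "gi * g = 1" using inv g by blast
  show ?thesis
  proof
    show "coset (x * g) G \<subseteq> coset x G"
      unfolding coset_def using cl g by (auto simp: mult.assoc)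
    show "coset x G \<subseteq> coset (x * g) G"
    proof
      fix y assume "y \<in> coset x G"
      then obtain k where k: "k \<in> G" "y = x * k" unfolding coset_def by auto
      have "y = x * g * (gi * k)" using k gi by (metis mult.assoc mult_1_left)
      moreover have "gi * k \<in> G" using cl gi k by auto
      ultimately show "y \<in> coset (x * g) G" unfolding coset_def by auto
    qed
  qed
qed

lemma coset_eq_iff:
  assumes G: "unit_subgroup G"
  shows "coset y G = coset x G \<longleftrightarrow> y \<in> coset (x::'a::ring_1) G"
proof
  have one: "1 \<in> G" using G unfolding unit_subgroup_def by auto
  show "coset y G = coset x G \<Longrightarrow> y \<in> coset x G"
    using one unfolding coset_def by (metis image_eqI mult_1_right)
  show "y \<in> coset x G \<Longrightarrow> coset y G = coset x G"
  proof -
    assume "y \<in> coset x G"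
    then obtain g where "g \<in> G" "y = x * g" unfolding coset_def by auto
    then show ?thesis using coset_mult[OF G] by simp
  qed
qed

theorem theorem2p3:
  fixes G :: "'a::{ring_1, finite} set" and h :: "'a set \<Rightarrow> nat"
  assumes "unit_subgroup G"
    and "bij_betw h (cosets G) {0..<card (cosets G)}"
  shows "\<exists>m::nat. real m = (\<Sum>a\<in>dG G. real (MG G a) / real a) \<and>
           ZDF (coset_index_fun h G) {0..<m} (card (UNIV :: 'a set)) m {NG G a | a. a \<noteq> 0}"
proof -
  note G = assms(1)
  have one: "1 \<in> G" using G unfolding unit_subgroup_def by auto
  have self: "r \<in> coset r G" for r using one unfolding coset_def by (metis image_eqI mult_1_right)
  have cpos: "card (coset r G) > 0" for r
    using self[of r] by (metis card_gt_0_iff empty_iff finite)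
  define m where "m = card (cosets G)"
  have s1: "(\<Sum>a\<in>dG G. real (MG G a) / real a) = (\<Sum>r\<in>UNIV. 1 / real (card (coset r G)))"
  proof -
    have "(\<Sum>r\<in>UNIV. 1 / real (card (coset r G)))
        = (\<Sum>a\<in>dG G. \<Sum>r\<in>{r\<in>UNIV. card (coset r G) = a}. 1 / real (card (coset r G)))"
      by (rule sum.group[symmetric]) (auto simp: dG_def)
    also have "\<dots> = (\<Sum>a\<in>dG G. real (MG G a) / real a)"
      by (rule sum.cong) (auto simp: MG_def)
    finally show ?thesis by simp
  qed
  have s2: "(\<Sum>r\<in>UNIV. 1 / real (card (coset r G))) = real m"
  proof -
    have "(\<Sum>r\<in>UNIV. 1 / real (card (coset r G)))
        = (\<Sum>C\<in>cosets G. \<Sum>r\<in>{r\<in>UNIV. coset r G = C}. 1 / real (card (coset r G)))"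
      by (rule sum.group[symmetric]) (auto simp: cosets_def)
    also have "\<dots> = (\<Sum>C\<in>cosets G. 1)"
    proof (rule sum.cong)
      fix C assume "C \<in> cosets G"
      then obtain x where x: "C = coset x G" unfolding cosets_def by auto
      have e: "{r\<in>UNIV. coset r G = C} = C" using coset_eq_iff[OF G] x by auto
      have "(\<Sum>r\<in>{r\<in>UNIV. coset r G = C}. 1 / real (card (coset r G)))
          = (\<Sum>r\<in>C. 1 / real (card C))"
        by (rule sum.cong) (use e in auto)
      also have "\<dots> = 1" using cpos[of x] x by (simp add: card_gt_0_iff)
      finally show "(\<Sum>r\<in>{r\<in>UNIV. coset r G = C}. 1 / real (card (coset r G))) = 1" .
    qed simp
    finally show ?thesis by (simp add: m_def)
  qed
  have inj: "inj_on h (cosets G)" and himg: "h ` cosets G = {0..<m}"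
    using assms(2) unfolding bij_betw_def m_def by auto
  have rng: "range (coset_index_fun h G) = {0..<m}"
  proof -
    have "range (coset_index_fun h G) = h ` range (\<lambda>x. coset x G)"
      unfolding coset_index_fun_def by auto
    then show ?thesis using himg unfolding cosets_def by simp
  qed
  have zd: "card {x. coset_index_fun h G (x + a) = coset_index_fun h G x} = NG G a" for a
  proof -
    have "{x. coset_index_fun h G (x + a) = coset_index_fun h G x} = (\<Union>g\<in>G. {x. x * (g - 1) = a})"
    proof -
      have "coset_index_fun h G (x + a) = coset_index_fun h G x \<longleftrightarrow> coset (x + a) G = coset x G" for x
        unfolding coset_index_fun_def using inj unfolding inj_on_def cosets_def by auto
      also have "\<dots> x \<longleftrightarrow> x + a \<in> coset x G" for x by (rule coset_eq_iff[OF G])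
      also have "\<dots> x \<longleftrightarrow> (\<exists>g\<in>G. x * (g - 1) = a)" for x
        unfolding coset_def by (auto simp: right_diff_distrib algebra_simps) (metis add.commute image_eqI)
      finally show ?thesis by auto
    qed
    then show ?thesis unfolding NG_def by simp
  qed
  show ?thesis
    apply (rule exI[of _ m])
    using s1 s2 rng zd unfolding ZDF_def by auto
qed

end
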